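(* Assume $S^t(\mu,\nu)>0$ and let $X$ be $F^t$ conditioned on $F^t_{t+1}=r$. Then $$D(X_0\|F^t_0)+D(X_{-1}\mid X_0\,\|\,B^t_{-1}\mid B^t_0)\ \ge\ -\log\|\mu\|_2^2,$$ $$D(X_t\|B^t_t)+D(X_{t+1}\mid X_t\,\|\,F^t_{t+1}\mid F^t_t)\ \ge\ -\log\|\nu\|_2^2 .$$
   Context: $\Omega$ is a finite set, $S$ a symmetric substochastic matrix on $\Omega$ with nonnegative entries, $u,v$ nonnegative vectors with $\|u\|_2=\|v\|_2=1$, $\mu=u/\|u\|_1$, $\nu=v/\|v\|_1$, $t$ a positive integer, $S^t(\mu,\nu)=\sum_{x,y}\mu(x)S^t(x,y)\nu(y)$. Let $\Omega_\circ=\Omega\cup\{r\}$, $r\notin\Omega$, fix $z_0\in\Omega$. $F^t$ is the sub-probability walk on $\Omega_\circ$ at times $-1,\ldots,t+1$ with $\Pr[F^t=w]=\mu(w_0)\prod_{i=1}^tS(w_{i-1},w_i)\,c(w)$ for $w_{-1}=r$, $w_0,\ldots,w_t\in\Omega$, where $c(w)=\nu(w_t)$ if $w_{t+1}=r$, $1-\nu(w_t)$ if $w_{t+1}=z_0$, 0 otherwise. $B^t$ has $\Pr[B^t=w]=\nu(w_t)\prod_{i=1}^tS(w_i,w_{i-1})\,c'(w)$ for $w_{t+1}=r$, $w_0,\ldots,w_t\in\Omega$, with $c'(w)=\mu(w_0)$ if $w_{-1}=r$, $1-\mu(w_0)$ if $w_{-1}=z_0$, 0 otherwise. $X$ has $\Pr[X=w]=\Pr[F^t=w]/S^t(\mu,\nu)$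 for $w_{t+1}=r$. Divergence $D(p\|q)=\sum_xp(x)\log\frac{p(x)}{q(x)}$ (terms with $p(x)=0$ are 0, log base 2), applied to distribution functions of random variables; conditional divergence $D(A_1\mid A_2\,\|\,B_1\mid B_2)=\sum_a\Pr[A_2=a]\,D(\operatorname{dist}(A_1\mid A_2=a)\,\|\,\operatorname{dist}(B_1\mid B_2=a))$ with $\operatorname{dist}(B_1\mid B_2=a)(b)=\Pr[B_1=b,B_2=a]/\Pr[B_2=a]$. *)

theory Defs
  imports "HOL-Analysis.Analysis"
begin

(* Omega is the finite type 'a; Omega_o = 'a option, with r = None.
   A walk at times -1..t+1 is a list w of length t+3 with w!(i+1) = w_i. *)

fun mpow :: "('a::finite \<Rightarrow> 'a \<Rightarrow> real) \<Rightarrow> nat \<Rightarrow> 'a \<Rightarrow> 'a \<Rightarrow> real" where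
  "mpow S 0 x y = (if x = y then 1 else 0)"
| "mpow S (Suc n) x y = (\<Sum>z\<in>UNIV. mpow S n x z * S z y)"

definition bilin :: "('a::finite \<Rightarrow> 'a \<Rightarrow> real) \<Rightarrow> ('a \<Rightarrow> real) \<Rightarrow> ('a \<Rightarrow> real) \<Rightarrow> real" where
  "bilin M mu nu = (\<Sum>x\<in>UNIV. \<Sum>y\<in>UNIV. mu x * M x y * nu y)"

definition walks :: "nat \<Rightarrow> ('a::finite) option list set" where
  "walks t = {w. length w = t + 3}"

definition Fdist :: "('a::finite \<Rightarrow> 'a \<Rightarrow> real) \<Rightarrow> ('a \<Rightarrow> real) \<Rightarrow> ('a \<Rightarrow> real) \<Rightarrow> 'a \<Rightarrow> nat
     \<Rightarrow> 'a option list \<Rightarrow> real" where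
  "Fdist S mu nu z0 t w =
     (if length w = t + 3 \<and> w ! 0 = None \<and> (\<forall>i\<in>{1..t+1}. w ! i \<noteq> None) then
        mu (the (w ! 1)) * (\<Prod>i\<in>{1..t}. S (the (w ! i)) (the (w ! (i+1)))) *
        (if w ! (t+2) = None then nu (the (w ! (t+1)))
         else if w ! (t+2) = Some z0 then 1 - nu (the (w ! (t+1))) else 0)
      else 0)"

definition Bdist :: "('a::finite \<Rightarrow> 'a \<Rightarrow> real) \<Rightarrow> ('a \<Rightarrow> real) \<Rightarrow> ('a \<Rightarrow> real) \<Rightarrow> 'a \<Rightarrow> nat
     \<Rightarrow> 'a option list \<Rightarrow> real" where
  "Bdist S mu nu z0 t w =
     (if length w = t + 3 \<and> w ! (t+2) = None \<and> (\<forall>i\<in>{1..t+1}. w ! i \<noteq> None) then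
        nu (the (w ! (t+1))) * (\<Prod>i\<in>{1..t}. S (the (w ! (i+1))) (the (w ! i))) *
        (if w ! 0 = None then mu (the (w ! 1))
         else if w ! 0 = Some z0 then 1 - mu (the (w ! 1)) else 0)
      else 0)"

definition Xdist :: "('a::finite \<Rightarrow> 'a \<Rightarrow> real) \<Rightarrow> ('a \<Rightarrow> real) \<Rightarrow> ('a \<Rightarrow> real) \<Rightarrow> 'a \<Rightarrow> nat
     \<Rightarrow> 'a option list \<Rightarrow> real" where
  "Xdist S mu nu z0 t w =
     (if length w = t + 3 \<and> w ! (t+2) = None
      then Fdist S mu nu z0 t w / bilin (mpow S t) mu nu else 0)"

(* distribution of the coordinate at list position k (= time k-1) *)
definition marg :: "('a::finite option list \<Rightarrow> real) \<Rightarrow> nat \<Rightarrow> nat \<Rightarrow> 'a option \<Rightarrow> real" where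
  "marg P t k a = (\<Sum>w\<in>walks t. if w ! k = a then P w else 0)"

definition joint :: "('a::finite option list \<Rightarrow> real) \<Rightarrow> nat \<Rightarrow> nat \<Rightarrow> nat
     \<Rightarrow> 'a option \<Rightarrow> 'a option \<Rightarrow> real" where
  "joint P t j k b a = (\<Sum>w\<in>walks t. if w ! j = b \<and> w ! k = a then P w else 0)"

definition KL :: "('b::finite \<Rightarrow> real) \<Rightarrow> ('b \<Rightarrow> real) \<Rightarrow> ereal" where
  "KL p q = (if \<exists>x. p x > 0 \<and> q x = 0 then \<infinity>
             else ereal (\<Sum>x\<in>UNIV. if p x = 0 then 0 else p x * log 2 (p x / q x)))"

(* D(A_j | A_k || B_j | B_k) where A ~ P, B ~ Q, coordinates at list positions j, k *)
definition condKL :: "('a::finite option list \<Rightarrow> real) \<Rightarrow> ('a option list \<Rightarrow> real) \<Rightarrow> nat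
     \<Rightarrow> nat \<Rightarrow> nat \<Rightarrow> ereal" where
  "condKL P Q t j k = (\<Sum>a\<in>UNIV. ereal (marg P t k a) *
      KL (\<lambda>b. joint P t j k b a / marg P t k a) (\<lambda>b. joint Q t j k b a / marg Q t k a))"

end

theory Submission
  imports Defs
begin

definition emb :: "'a option \<Rightarrow> 'a list \<Rightarrow> 'a option \<Rightarrow> 'a option list" where
  "emb b ys c = b # map Some ys @ [c]"

lemma emb_nth0[simp]: "emb b ys c ! 0 = b" by (simp add: emb_def)
lemma emb_nthSuc[simp]: "i < length ys \<Longrightarrow> emb b ys c ! Suc i = Some (ys ! i)"
  by (simp add: emb_def nth_append)
lemma emb_nth_last[simp]: "emb b ys c ! Suc (length ys) = c"
  by (simp add: emb_def nth_append)
lemma emb_len[simp]: "length (emb b ys c) = length ys + 2" by (simp add: emb_def)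

lemma emb_inj: "inj (\<lambda>(b, ys, c). emb b ys c)"
  by (auto simp: inj_def emb_def inj_map_eq_map)

lemma emb_surj:
  fixes w :: "'a option list"
  assumes "length w = t + 3" "\<forall>i\<in>{1..t+1}. w ! i \<noteq> None"
  shows "w = emb (w ! 0) (map (\<lambda>i. the (w ! Suc i)) [0..<t+1]) (w ! (t+2))"
proof (rule nth_equalityI)
  show "length w = length (emb (w ! 0) (map (\<lambda>i. the (w ! Suc i)) [0..<t+1]) (w ! (t+2)))"
    using assms by simp
  fix i assume i: "i < length w"
  show "w ! i = emb (w ! 0) (map (\<lambda>i. the (w ! Suc i)) [0..<t+1]) (w ! (t+2)) ! i"
  proof (cases i)
    case 0 then show ?thesis by simp
  next
    case (Suc j)
    show ?thesis
    proof (cases "j < t + 1")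
      case True
      then have "w ! Suc j \<noteq> None" using assms(2) by auto
      moreover have "(map (\<lambda>i. the (w ! Suc i)) [0..<t+1]) ! j = the (w ! Suc j)"
        using True by (simp del: upt_Suc)
      ultimately show ?thesis using True Suc by auto
    next
      case False
      then have "j = t+1" using i Suc assms by auto
      then show ?thesis using Suc emb_nth_last[of "w!0" "map (\<lambda>i. the (w ! Suc i)) [0..<t+1]" "w!(t+2)"]
        by simp
    qed
  qed
qed

lemma walks_decomp:
  fixes h :: "'a::finite option list \<Rightarrow> real"
  assumes "\<And>w. h w \<noteq> 0 \<Longrightarrow> (\<forall>i\<in>{1..t+1}. w!i \<noteq> None)"
  shows "(\<Sum>w\<in>walks t. h w) = (\<Sum>b\<in>UNIV. \<Sum>ys\<in>{ys. length ys = t+1}. \<Sum>c\<in>UNIV. h (emb b ys c))"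
proof -
  let ?L = "{ys::'a list. length ys = t+1}"
  let ?E = "(\<lambda>(b, ys, c). emb b ys c) ` (UNIV \<times> ?L \<times> UNIV)"
  have finL: "finite ?L" using finite_lists_length_eq[of "UNIV::'a set"] by simp
  have fw: "finite (walks t :: 'a option list set)"
    unfolding walks_def using finite_lists_length_eq[of "UNIV::'a option set"] by simp
  have sub: "?E \<subseteq> walks t" by (auto simp: walks_def)
  have "(\<Sum>w\<in>walks t. h w) = (\<Sum>w\<in>?E. h w)"
  proof (rule sum.mono_neutral_right[OF fw sub, symmetric, symmetric])
    show "\<forall>w\<in>walks t - ?E. h w = 0"
    proof
      fix w assume w: "w \<in> walks t - ?E"
      show "h w = 0"
      proof (rule ccontr)
        assume "h w \<noteq> 0"
        then have "\<forall>i\<in>{1..t+1}. w!i \<noteq> None" using assms by blast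
        moreover have "length w = t+3" using w by (simp add: walks_def)
        ultimately have "w = emb (w ! 0) (map (\<lambda>i. the (w ! Suc i)) [0..<t+1]) (w ! (t+2))"
          using emb_surj by blast
        then have "w \<in> ?E" by force
        then show False using w by blast
      qed
    qed
  qed
  also have "\<dots> = (\<Sum>x\<in>UNIV \<times> ?L \<times> UNIV. h ((\<lambda>(b, ys, c). emb b ys c) x))"
    using sum.reindex[OF inj_on_subset[OF emb_inj subset_UNIV], of h] by (simp add: o_def)
  also have "\<dots> = (\<Sum>b\<in>UNIV. \<Sum>ys\<in>?L. \<Sum>c\<in>UNIV. h (emb b ys c))"
    by (simp add: sum.cartesian_product split_def)
  finally show ?thesis .
qed

definition pw :: "('a \<Rightarrow> 'a \<Rightarrow> real) \<Rightarrow> nat \<Rightarrow> 'a list \<Rightarrow> real" where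
  "pw S n ys = (\<Prod>i<n. S (ys ! i) (ys ! Suc i))"

lemma lists_Suc: "{ys::'a list. length ys = Suc m} = (\<lambda>(ys, y). ys @ [y]) ` ({ys. length ys = m} \<times> UNIV)"
proof -
  { fix zs :: "'a list" assume "length zs = Suc m"
    then have "zs = butlast zs @ [last zs]"
      by (metis append_butlast_last_id list.size(3) nat.distinct(1))
    moreover have "length (butlast zs) = m" using \<open>length zs = Suc m\<close> by simp
    ultimately have "zs \<in> (\<lambda>(ys, y). ys @ [y]) ` ({ys. length ys = m} \<times> UNIV)" by force }
  then show ?thesis by auto
qed

lemma path_sum:
  fixes S :: "'a::finite \<Rightarrow> 'a \<Rightarrow> real"
  shows "(\<Sum>ys\<in>{ys. length ys = Suc n}. f (ys ! 0) * pw S n ys * g (ys ! n))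
       = (\<Sum>x\<in>UNIV. \<Sum>y\<in>UNIV. f x * mpow S n x y * g y)"
proof (induction n arbitrary: g)
  case 0
  have "{ys::'a list. length ys = Suc 0} = (\<lambda>y. [y]) ` UNIV"
    by (auto simp: length_Suc_conv)
  then have "(\<Sum>ys\<in>{ys::'a list. length ys = Suc 0}. f (ys ! 0) * pw S 0 ys * g (ys ! 0))
      = (\<Sum>y\<in>UNIV. f y * g y)"
    by (simp add: sum.reindex inj_def pw_def)
  moreover have "\<And>x. (\<Sum>y\<in>UNIV. f x * mpow S 0 x y * g y) = (\<Sum>y\<in>UNIV. if x = y then f x * g y else 0)"
    by (intro sum.cong) auto
  ultimately show ?case by simp
next
  case (Suc n)
  let ?g = "\<lambda>z. \<Sum>y\<in>UNIV. S z y * g y"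
  have inj: "inj_on (\<lambda>(ys, y). ys @ [y]) ({ys::'a list. length ys = Suc n} \<times> UNIV)"
    by (auto simp: inj_on_def)
  have fin: "finite {ys::'a list. length ys = Suc n}"
    using finite_lists_length_eq[of "UNIV::'a set"] by simp
  have "(\<Sum>ys\<in>{ys. length ys = Suc (Suc n)}. f (ys ! 0) * pw S (Suc n) ys * g (ys ! Suc n))
     = (\<Sum>p\<in>{ys::'a list. length ys = Suc n} \<times> UNIV. (\<lambda>zs. f (zs ! 0) * pw S (Suc n) zs * g (zs ! Suc n)) ((\<lambda>(ys, y). ys @ [y]) p))"
    unfolding lists_Suc[of "Suc n"] using sum.reindex[OF inj] by (simp add: o_def)
  also have "\<dots> = (\<Sum>ys\<in>{ys::'a list. length ys = Suc n}. \<Sum>y\<in>UNIV. f (ys ! 0) * pw S n ys * (S (ys ! n) y * g y))"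
    unfolding sum.cartesian_product
  proof (intro sum.cong refl, clarify)
    fix ys y assume ys: "length (ys::'a list) = Suc n"
    have "pw S (Suc n) (ys @ [y]) = pw S n ys * S (ys ! n) y"
      using ys by (simp add: pw_def nth_append)
    moreover have "(ys @ [y]) ! 0 = ys ! 0" using ys by (simp add: nth_append)
    moreover have "(ys @ [y]) ! Suc n = y" using ys by (simp add: nth_append)
    ultimately show "f ((ys @ [y]) ! 0) * pw S (Suc n) (ys @ [y]) * g ((ys @ [y]) ! Suc n)
        = f (ys ! 0) * pw S n ys * (S (ys ! n) y * g y)"
      by simp
  qed
  also have "\<dots> = (\<Sum>ys\<in>{ys::'a list. length ys = Suc n}. f (ys ! 0) * pw S n ys * ?g (ys ! n))"
    by (simp add: sum_distrib_left)
  also have "\<dots> = (\<Sum>x\<in>UNIV. \<Sum>z\<in>UNIV. f x * mpow S n x z * ?g z)"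
    by (rule Suc.IH)
  also have "\<dots> = (\<Sum>x\<in>UNIV. \<Sum>z\<in>UNIV. \<Sum>y\<in>UNIV. f x * mpow S n x z * S z y * g y)"
    by (simp add: sum_distrib_left mult.assoc)
  also have "\<dots> = (\<Sum>x\<in>UNIV. \<Sum>y\<in>UNIV. \<Sum>z\<in>UNIV. f x * mpow S n x z * S z y * g y)"
    by (rule sum.cong[OF refl], rule sum.swap)
  also have "\<dots> = (\<Sum>x\<in>UNIV. \<Sum>y\<in>UNIV. f x * mpow S (Suc n) x y * g y)"
    by (simp add: sum_distrib_left sum_distrib_right mult.assoc)
  finally show ?case .
qed


lemma emb_nth_t2[simp]: "length ys = t+1 \<Longrightarrow> emb b ys c ! (t+2) = c"
  using emb_nth_last[of b ys c] by (simp add: numeral_2_eq_2)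

lemma emb_nth_SS[simp]: "length ys = t+1 \<Longrightarrow> emb b ys c ! Suc (Suc t) = c"
  using emb_nth_last[of b ys c] by simp

lemma emb_nth1[simp]: "length ys = t+1 \<Longrightarrow> emb b ys c ! 1 = Some (ys ! 0)"
  using emb_nthSuc[of 0 ys b c] by simp

lemma emb_nott[simp]: "length ys = t+1 \<Longrightarrow> emb b ys c ! (t+1) = Some (ys ! t)"
  using emb_nthSuc[of t ys b c] by simp

lemma emb_prod:
  assumes "length ys = t+1"
  shows "(\<Prod>i\<in>{1..t}. S (the (emb b ys c ! i)) (the (emb b ys c ! (i+1)))) = pw S t ys"
proof -
  have "(\<Prod>i\<in>{1..t}. S (the (emb b ys c ! i)) (the (emb b ys c ! (i+1))))
      = (\<Prod>i<t. S (the (emb b ys c ! Suc i)) (the (emb b ys c ! (Suc i+1))))"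
    using prod.atLeast1_atMost_eq[of "\<lambda>i. S (the (emb b ys c ! i)) (the (emb b ys c ! (i+1)))" t]
    by simp
  also have "\<dots> = pw S t ys" unfolding pw_def
    by (rule prod.cong) (use assms in auto)
  finally show ?thesis .
qed

lemma emb_ok: "length ys = t+1 \<Longrightarrow> \<forall>i\<in>{1..t+1}. emb b ys c ! i \<noteq> None"
proof
  fix i assume "length ys = t+1" "i \<in> {1..t+1}"
  then obtain j where "i = Suc j" "j < length ys" by (cases i) auto
  then show "emb b ys c ! i \<noteq> None" by simp
qed

lemma Fdist_emb:
  assumes "length ys = t+1"
  shows "Fdist S mu nu z0 t (emb b ys c) = (if b = None then mu (ys!0) * pw S t ys *
     (if c = None then nu (ys!t) else if c = Some z0 then 1 - nu (ys!t) else 0) else 0)"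
  using assms emb_ok[OF assms] emb_prod[OF assms] unfolding Fdist_def by simp

lemma pw_sym:
  assumes "\<And>x y. S x y = S y x"
  shows "pw S t ys = (\<Prod>i<t. S (ys ! Suc i) (ys ! i))"
  unfolding pw_def using assms by simp

lemma Bdist_emb:
  assumes "length ys = t+1" and sym: "\<And>x y. S x y = S y x"
  shows "Bdist S mu nu z0 t (emb b ys c) = (if c = None then nu (ys!t) * pw S t ys *
     (if b = None then mu (ys!0) else if b = Some z0 then 1 - mu (ys!0) else 0) else 0)"
proof -
  have "(\<Prod>i\<in>{1..t}. S (the (emb b ys c ! (i+1))) (the (emb b ys c ! i)))
     = (\<Prod>i\<in>{1..t}. S (the (emb b ys c ! i)) (the (emb b ys c ! (i+1))))"
    by (rule prod.cong[OF refl]) (rule sym)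
  also have "\<dots> = pw S t ys" by (rule emb_prod[OF assms(1)])
  finally have P: "(\<Prod>i\<in>{1..t}. S (the (emb b ys c ! (i+1))) (the (emb b ys c ! i))) = pw S t ys" .
  show ?thesis
    unfolding Bdist_def P using assms emb_ok[OF assms(1)] by simp
qed

lemma Xdist_emb:
  assumes "length ys = t+1"
  shows "Xdist S mu nu z0 t (emb b ys c) = (if b = None \<and> c = None then mu (ys!0) * pw S t ys *
     nu (ys!t) / bilin (mpow S t) mu nu else 0)"
  using assms Fdist_emb[OF assms] unfolding Xdist_def by simp

lemma Fdist_ok: "Fdist S mu nu z0 t w \<noteq> 0 \<Longrightarrow> (\<forall>i\<in>{1..t+1}. w!i \<noteq> None)"
  unfolding Fdist_def by (auto split: if_splits)
lemma Bdist_ok: "Bdist S mu nu z0 t w \<noteq> 0 \<Longrightarrow> (\<forall>i\<in>{1..t+1}. w!i \<noteq> None)"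
  unfolding Bdist_def by (auto split: if_splits)
lemma Xdist_ok: "Xdist S mu nu z0 t w \<noteq> 0 \<Longrightarrow> (\<forall>i\<in>{1..t+1}. w!i \<noteq> None)"
  unfolding Xdist_def using Fdist_ok by (fastforce split: if_splits)
lemma Xdist_0: "Xdist S mu nu z0 t w \<noteq> 0 \<Longrightarrow> w ! 0 = None"
  unfolding Xdist_def Fdist_def by (auto split: if_splits)
lemma Xdist_last: "Xdist S mu nu z0 t w \<noteq> 0 \<Longrightarrow> w ! (t+2) = None"
  unfolding Xdist_def by (auto split: if_splits)

lemma marg_gen:
  fixes P :: "'a::finite option list \<Rightarrow> real"
  assumes ok: "\<And>w. P w \<noteq> 0 \<Longrightarrow> (\<forall>i\<in>{1..t+1}. w!i \<noteq> None)" and j: "j \<le> t"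
  shows "marg P t (Suc j) (Some a) = (\<Sum>ys\<in>{ys. length ys = t+1}.
           if ys ! j = a then (\<Sum>b\<in>UNIV. \<Sum>c\<in>UNIV. P (emb b ys c)) else 0)"
proof -
  have "marg P t (Suc j) (Some a) = (\<Sum>b\<in>UNIV. \<Sum>ys\<in>{ys. length ys = t+1}. \<Sum>c\<in>UNIV.
       (if emb b ys c ! Suc j = Some a then P (emb b ys c) else 0))"
    unfolding marg_def by (rule walks_decomp) (auto dest!: ok split: if_splits)
  also have "\<dots> = (\<Sum>ys\<in>{ys. length ys = t+1}. \<Sum>b\<in>UNIV. \<Sum>c\<in>UNIV.
       (if ys ! j = a then P (emb b ys c) else 0))"
    by (subst sum.swap) (intro sum.cong refl, use j in auto)
  also have "\<dots> = (\<Sum>ys\<in>{ys. length ys = t+1}.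
           if ys ! j = a then (\<Sum>b\<in>UNIV. \<Sum>c\<in>UNIV. P (emb b ys c)) else 0)"
    by (intro sum.cong refl) auto
  finally show ?thesis .
qed

lemma marg_None:
  fixes P :: "'a::finite option list \<Rightarrow> real"
  assumes ok: "\<And>w. P w \<noteq> 0 \<Longrightarrow> (\<forall>i\<in>{1..t+1}. w!i \<noteq> None)" and j: "j \<le> t"
  shows "marg P t (Suc j) None = 0"
proof -
  have "marg P t (Suc j) None = (\<Sum>b\<in>UNIV. \<Sum>ys\<in>{ys. length ys = t+1}. \<Sum>c\<in>UNIV.
       (if emb b ys c ! Suc j = None then P (emb b ys c) else 0))"
    unfolding marg_def by (rule walks_decomp) (auto dest!: ok split: if_splits)
  also have "\<dots> = 0"
    by (intro sum.neutral ballI) (use j in auto)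
  finally show ?thesis .
qed

lemma joint0_gen:
  fixes P :: "'a::finite option list \<Rightarrow> real"
  assumes ok: "\<And>w. P w \<noteq> 0 \<Longrightarrow> (\<forall>i\<in>{1..t+1}. w!i \<noteq> None)"
  shows "joint P t 0 1 bb (Some a) = (\<Sum>ys\<in>{ys. length ys = t+1}.
           if ys ! 0 = a then (\<Sum>c\<in>UNIV. P (emb bb ys c)) else 0)"
proof -
  have "joint P t 0 1 bb (Some a) = (\<Sum>b\<in>UNIV. \<Sum>ys\<in>{ys. length ys = t+1}. \<Sum>c\<in>UNIV.
       (if emb b ys c ! 0 = bb \<and> emb b ys c ! 1 = Some a then P (emb b ys c) else 0))"
    unfolding joint_def by (rule walks_decomp) (auto dest!: ok split: if_splits)
  also have "\<dots> = (\<Sum>b\<in>UNIV. \<Sum>ys\<in>{ys. length ys = t+1}.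
       if b = bb then (if ys ! 0 = a then (\<Sum>c\<in>UNIV. P (emb b ys c)) else 0) else 0)"
    by (intro sum.cong refl) auto
  also have "\<dots> = (\<Sum>ys\<in>{ys. length ys = t+1}. \<Sum>b\<in>UNIV.
       if b = bb then (if ys ! 0 = a then (\<Sum>c\<in>UNIV. P (emb b ys c)) else 0) else 0)"
    by (rule sum.swap)
  also have "\<dots> = (\<Sum>ys\<in>{ys. length ys = t+1}.
           if ys ! 0 = a then (\<Sum>c\<in>UNIV. P (emb bb ys c)) else 0)"
    by (simp add: sum.delta cong: if_cong)
  finally show ?thesis .
qed

lemma jointL_gen:
  fixes P :: "'a::finite option list \<Rightarrow> real"
  assumes ok: "\<And>w. P w \<noteq> 0 \<Longrightarrow> (\<forall>i\<in>{1..t+1}. w!i \<noteq> None)"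
  shows "joint P t (t+2) (t+1) cc (Some a) = (\<Sum>ys\<in>{ys. length ys = t+1}.
           if ys ! t = a then (\<Sum>b\<in>UNIV. P (emb b ys cc)) else 0)"
proof -
  have "joint P t (t+2) (t+1) cc (Some a) = (\<Sum>b\<in>UNIV. \<Sum>ys\<in>{ys. length ys = t+1}. \<Sum>c\<in>UNIV.
       (if emb b ys c ! (t+2) = cc \<and> emb b ys c ! (t+1) = Some a then P (emb b ys c) else 0))"
    unfolding joint_def by (rule walks_decomp) (auto dest!: ok split: if_splits)
  also have "\<dots> = (\<Sum>ys\<in>{ys. length ys = t+1}. \<Sum>b\<in>UNIV. \<Sum>c\<in>UNIV.
       if c = cc then (if ys ! t = a then P (emb b ys c) else 0) else 0)"
    by (subst sum.swap) (intro sum.cong refl, auto)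
  also have "\<dots> = (\<Sum>ys\<in>{ys. length ys = t+1}.
           if ys ! t = a then (\<Sum>b\<in>UNIV. P (emb b ys cc)) else 0)"
    by (simp add: sum.delta' cong: if_cong) (intro sum.cong refl, auto)
  finally show ?thesis .
qed

lemma joint_cond:
  fixes P :: "'a::finite option list \<Rightarrow> real"
  assumes "\<And>w. P w \<noteq> 0 \<Longrightarrow> w ! j = None"
  shows "joint P t j k b a = (if b = None then marg P t k a else 0)"
  unfolding joint_def marg_def
  by (cases b) (auto intro!: sum.cong sum.neutral, (metis assms option.distinct(1))+)


lemma KL_eval:
  fixes p q :: "'b::finite \<Rightarrow> real"
  assumes "\<And>x. p x > 0 \<Longrightarrow> q x > 0"
  shows "KL p q = ereal (\<Sum>x\<in>UNIV. if p x = 0 then 0 else p x * log 2 (p x / q x))"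
proof -
  have "\<not> (\<exists>x. p x > 0 \<and> q x = 0)" using assms by force
  then show ?thesis unfolding KL_def by simp
qed

lemma condKL_eval:
  fixes P Q :: "'a::finite option list \<Rightarrow> real"
  assumes J: "\<And>a b. joint P t j k b a = (if b = None then marg P t k a else 0)"
    and nn: "\<And>a. marg P t k a \<ge> 0"
    and W: "\<And>a. marg P t k a > 0 \<Longrightarrow> joint Q t j k None a / marg Q t k a = w a \<and> w a > 0"
  shows "condKL P Q t j k = ereal (\<Sum>a\<in>UNIV. marg P t k a * (if marg P t k a > 0 then - log 2 (w a) else 0))"
  unfolding condKL_def sum_ereal[symmetric]
proof (rule sum.cong[OF refl])
  fix a
  show "ereal (marg P t k a) * KL (\<lambda>b. joint P t j k b a / marg P t k a) (\<lambda>b. joint Q t j k b a / marg Q t k a)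
     = ereal (marg P t k a * (if marg P t k a > 0 then - log 2 (w a) else 0))"
  proof (cases "marg P t k a > 0")
    case False
    then have "marg P t k a = 0" using nn[of a] by linarith
    then show ?thesis by (simp add: zero_ereal_def[symmetric])
  next
    case True
    have pe: "(\<lambda>b. joint P t j k b a / marg P t k a) = (\<lambda>b. if b = None then 1 else 0)"
      using True by (auto simp: J)
    have qN: "joint Q t j k None a / marg Q t k a = w a" "w a > 0" using W[OF True] by auto
    have "KL (\<lambda>b. joint P t j k b a / marg P t k a) (\<lambda>b. joint Q t j k b a / marg Q t k a)
        = ereal (\<Sum>b\<in>UNIV. if (if b = None then 1 else 0) = (0::real) then 0 else
             (if b = None then 1 else 0) * log 2 ((if b = None then 1 else 0) / (joint Q t j k b a / marg Q t k a)))"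
      unfolding pe by (rule KL_eval) (auto split: if_splits simp: qN)
    also have "\<dots> = ereal (\<Sum>b::'a option\<in>UNIV. if b = None then log 2 (1 / w a) else 0)"
    proof -
      have "\<And>b. (if (if b = None then 1 else 0) = (0::real) then 0 else
             (if b = None then 1 else 0) * log 2 ((if b = None then 1 else 0) / (joint Q t j k b a / marg Q t k a)))
           = (if b = None then log 2 (1 / w a) else 0)"
        by (auto simp: qN)
      moreover have "(\<Sum>b::'a option\<in>UNIV. if b = None then log 2 (1 / w a) else 0) = log 2 (1 / w a)"
        by (subst sum.delta) auto
      ultimately show ?thesis by simp
    qed
    also have "\<dots> = ereal (log 2 (1 / w a))" by simp
    also have "\<dots> = ereal (- log 2 (w a))"
      using qN by (simp add: log_divide)
    finally show ?thesis using True by simp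
  qed
qed

lemma gibbs:
  fixes p q w :: "'b::finite \<Rightarrow> real"
  assumes p0: "\<And>x. p x \<ge> 0" and p1: "sum p UNIV = 1"
    and qw: "\<And>x. p x > 0 \<Longrightarrow> q x > 0 \<and> w x > 0"
    and M: "(\<Sum>x\<in>{x. p x > 0}. q x * w x) \<le> M"
  shows "(\<Sum>x\<in>UNIV. if p x = 0 then 0 else p x * log 2 (p x / q x))
       + (\<Sum>x\<in>UNIV. p x * (if p x > 0 then - log 2 (w x) else 0)) \<ge> - log 2 M"
proof -
  define A where "A = {x. p x > 0}"
  define R where "R = (\<Sum>x\<in>A. q x * w x)"
  have finA: "finite A" by simp
  have pA: "sum p A = 1"
  proof -
    have "sum p UNIV = sum p A + sum p (UNIV - A)"
      by (metis Diff_partition finite_Diff finite sum.union_disjoint Diff_disjoint subset_UNIV)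
    moreover have "sum p (UNIV - A) = 0"
    proof (rule sum.neutral, rule ballI)
      fix x assume "x \<in> UNIV - A"
      then have "\<not> p x > 0" by (simp add: A_def)
      then show "p x = 0" using p0[of x] by linarith
    qed
    ultimately show ?thesis using p1 by simp
  qed
  have Ane: "A \<noteq> {}" using pA by auto
  have Rpos: "R > 0" unfolding R_def
    by (rule sum_pos[OF finA Ane]) (use qw in \<open>auto simp: A_def\<close>)
  have RM: "R \<le> M" using M by (simp add: R_def A_def)
  have L: "(\<Sum>x\<in>UNIV. if p x = 0 then 0 else p x * log 2 (p x / q x))
       + (\<Sum>x\<in>UNIV. p x * (if p x > 0 then - log 2 (w x) else 0))
     = (\<Sum>x\<in>A. p x * ln (p x / (q x * w x))) / ln 2"
  proof -
    have "(\<Sum>x\<in>UNIV. if p x = 0 then 0 else p x * log 2 (p x / q x))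
       + (\<Sum>x\<in>UNIV. p x * (if p x > 0 then - log 2 (w x) else 0))
       = (\<Sum>x\<in>UNIV. if p x > 0 then p x * ln (p x / (q x * w x)) / ln 2 else 0)"
      unfolding sum.distrib[symmetric]
    proof (rule sum.cong[OF refl])
      fix x
      show "(if p x = 0 then 0 else p x * log 2 (p x / q x)) + p x * (if p x > 0 then - log 2 (w x) else 0)
          = (if p x > 0 then p x * ln (p x / (q x * w x)) / ln 2 else 0)"
      proof (cases "p x > 0")
        case True
        with qw[OF True] have e: "ln (p x / q x) = ln (w x) + ln (p x / (q x * w x))"
          by (simp add: ln_div ln_mult)
        show ?thesis using True unfolding log_def e by (simp add: field_simps)
      next
        case False then have "p x = 0" using p0[of x] by linarith
        then show ?thesis by simp
      qed
    qed
    also have "\<dots> = (\<Sum>x\<in>A. p x * ln (p x / (q x * w x)) / ln 2)"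
      by (simp add: A_def sum.inter_filter[symmetric])
    finally show ?thesis by (simp add: sum_divide_distrib)
  qed
  have key: "(\<Sum>x\<in>A. p x * ln (p x / (q x * w x))) \<ge> - ln R"
  proof -
    have t: "p x * ln (p x / (q x * w x)) \<ge> p x - q x * w x / R - p x * ln R" if "x \<in> A" for x
    proof -
      have px: "p x > 0" using that by (simp add: A_def)
      have q: "q x > 0" "w x > 0" using qw[OF px] by auto
      have pos: "q x * w x / (p x * R) > 0" using px q Rpos by simp
      have "ln (q x * w x / (p x * R)) \<le> q x * w x / (p x * R) - 1" by (rule ln_le_minus_one[OF pos])
      moreover have "ln (q x * w x / (p x * R)) = - ln (p x / (q x * w x)) - ln R"
        using px q Rpos by (simp add: ln_div ln_mult)
      ultimately have "- ln (p x / (q x * w x)) - ln R \<le> q x * w x / (p x * R) - 1" by simp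
      then have "p x * (- ln (p x / (q x * w x)) - ln R) \<le> p x * (q x * w x / (p x * R) - 1)"
        using px by (simp add: mult_left_mono)
      moreover have "p x * (q x * w x / (p x * R) - 1) = q x * w x / R - p x"
        using px Rpos by (simp add: field_simps)
      moreover have "p x * (- ln (p x / (q x * w x)) - ln R) = - (p x * ln (p x / (q x * w x))) - p x * ln R"
        by (simp add: algebra_simps)
      ultimately show ?thesis by linarith
    qed
    have "(\<Sum>x\<in>A. p x * ln (p x / (q x * w x))) \<ge> (\<Sum>x\<in>A. p x - q x * w x / R - p x * ln R)"
      by (rule sum_mono) (rule t)
    also have "(\<Sum>x\<in>A. p x - q x * w x / R - p x * ln R) = 1 - R / R - ln R"
      using pA by (simp add: sum_subtractf sum_divide_distrib[symmetric] sum_distrib_right[symmetric] R_def)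
    finally show ?thesis using Rpos by simp
  qed
  have "- log 2 M \<le> - log 2 R" using Rpos RM by simp
  also have "- log 2 R = - ln R / ln 2" by (simp add: log_def)
  also have "\<dots> \<le> (\<Sum>x\<in>A. p x * ln (p x / (q x * w x))) / ln 2"
    by (rule divide_right_mono[OF key]) simp
  finally show ?thesis using L by simp
qed


lemma sum_option: "(\<Sum>x\<in>(UNIV::'b::finite option set). h x) = h None + (\<Sum>a\<in>UNIV. h (Some a))"
proof -
  have "(\<Sum>x\<in>(UNIV::'b::finite option set). h x) = (\<Sum>x\<in>insert None (Some ` UNIV). h x)"
    by (simp only: UNIV_option_conv[symmetric])
  also have "\<dots> = h None + (\<Sum>x\<in>Some ` UNIV. h x)"
    by (rule sum.insert) auto
  also have "(\<Sum>x\<in>Some ` UNIV. h x) = (\<Sum>a\<in>UNIV. h (Some a))"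
    by (simp add: sum.reindex)
  finally show ?thesis .
qed

lemma sum_two: "(\<Sum>c\<in>(UNIV::'b::finite option set). if c = None then A else if c = Some z0 then B else 0) = A + B"
  by (simp add: sum_option)

lemma sum_two_and: "(\<Sum>b\<in>(UNIV::'b::finite option set). \<Sum>c\<in>(UNIV::'c::finite option set).
     if b = None \<and> c = None then K else 0) = K"
  by (simp add: sum_option)

lemma ps_first:
  fixes S :: "'a::finite \<Rightarrow> 'a \<Rightarrow> real"
  shows "(\<Sum>ys\<in>{ys. length ys = t+1}. if ys!0 = a then f (ys!0) * pw S t ys * g (ys!t) else 0)
     = f a * (\<Sum>y\<in>UNIV. mpow S t a y * g y)"
proof -
  have "(\<Sum>ys\<in>{ys. length ys = t+1}. if ys!0 = a then f (ys!0) * pw S t ys * g (ys!t) else 0)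
     = (\<Sum>ys\<in>{ys. length ys = Suc t}. (\<lambda>x. if x = a then f x else 0) (ys!0) * pw S t ys * g (ys!t))"
    by (intro sum.cong) auto
  also have "\<dots> = (\<Sum>x\<in>UNIV. \<Sum>y\<in>UNIV. (if x = a then f x else 0) * mpow S t x y * g y)"
    by (rule path_sum)
  also have "\<dots> = (\<Sum>x\<in>UNIV. if x = a then (\<Sum>y\<in>UNIV. f a * mpow S t a y * g y) else 0)"
    by (intro sum.cong) auto
  also have "\<dots> = f a * (\<Sum>y\<in>UNIV. mpow S t a y * g y)"
    by (simp add: sum_distrib_left mult.assoc)
  finally show ?thesis .
qed

lemma ps_last:
  fixes S :: "'a::finite \<Rightarrow> 'a \<Rightarrow> real"
  shows "(\<Sum>ys\<in>{ys. length ys = t+1}. if ys!t = a then f (ys!0) * pw S t ys * g (ys!t) else 0)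
     = (\<Sum>x\<in>UNIV. f x * mpow S t x a) * g a"
proof -
  have "(\<Sum>ys\<in>{ys. length ys = t+1}. if ys!t = a then f (ys!0) * pw S t ys * g (ys!t) else 0)
     = (\<Sum>ys\<in>{ys. length ys = Suc t}. f (ys!0) * pw S t ys * (\<lambda>y. if y = a then g y else 0) (ys!t))"
    by (intro sum.cong) auto
  also have "\<dots> = (\<Sum>x\<in>UNIV. \<Sum>y\<in>UNIV. f x * mpow S t x y * (if y = a then g y else 0))"
    by (rule path_sum)
  also have "\<dots> = (\<Sum>x\<in>UNIV. f x * mpow S t x a * g a)"
    by (intro sum.cong) (auto simp: if_distrib cong: if_cong)
  also have "\<dots> = (\<Sum>x\<in>UNIV. f x * mpow S t x a) * g a"
    by (simp add: sum_distrib_right)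
  finally show ?thesis .
qed

lemma marg_first:
  fixes P :: "'a::finite option list \<Rightarrow> real"
  assumes ok: "\<And>w. P w \<noteq> 0 \<Longrightarrow> (\<forall>i\<in>{1..t+1}. w!i \<noteq> None)"
    and E: "\<And>ys. length ys = t+1 \<Longrightarrow> (\<Sum>b\<in>UNIV. \<Sum>c\<in>UNIV. P (emb b ys c)) = f (ys!0) * pw S t ys * g (ys!t)"
  shows "marg P t 1 (Some a) = f a * (\<Sum>y\<in>UNIV. mpow S t a y * g y)"
  using marg_gen[OF ok, where j=0 and a=a] ps_first[where t=t and a=a and f=f and S=S and g=g] E by (simp cong: if_cong)

lemma marg_last:
  fixes P :: "'a::finite option list \<Rightarrow> real"
  assumes ok: "\<And>w. P w \<noteq> 0 \<Longrightarrow> (\<forall>i\<in>{1..t+1}. w!i \<noteq> None)"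
    and E: "\<And>ys. length ys = t+1 \<Longrightarrow> (\<Sum>b\<in>UNIV. \<Sum>c\<in>UNIV. P (emb b ys c)) = f (ys!0) * pw S t ys * g (ys!t)"
  shows "marg P t (t+1) (Some a) = (\<Sum>x\<in>UNIV. f x * mpow S t x a) * g a"
  using marg_gen[OF ok, where j=t and a=a] ps_last[where t=t and a=a and f=f and S=S and g=g] E by (simp cong: if_cong)

lemma joint_first:
  fixes P :: "'a::finite option list \<Rightarrow> real"
  assumes ok: "\<And>w. P w \<noteq> 0 \<Longrightarrow> (\<forall>i\<in>{1..t+1}. w!i \<noteq> None)"
    and E: "\<And>ys. length ys = t+1 \<Longrightarrow> (\<Sum>c\<in>UNIV. P (emb bb ys c)) = f (ys!0) * pw S t ys * g (ys!t)"
  shows "joint P t 0 1 bb (Some a) = f a * (\<Sum>y\<in>UNIV. mpow S t a y * g y)"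
  using joint0_gen[OF ok, where bb=bb and a=a] ps_first[where t=t and a=a and f=f and S=S and g=g] E by (simp cong: if_cong)

lemma joint_last:
  fixes P :: "'a::finite option list \<Rightarrow> real"
  assumes ok: "\<And>w. P w \<noteq> 0 \<Longrightarrow> (\<forall>i\<in>{1..t+1}. w!i \<noteq> None)"
    and E: "\<And>ys. length ys = t+1 \<Longrightarrow> (\<Sum>b\<in>UNIV. P (emb b ys cc)) = f (ys!0) * pw S t ys * g (ys!t)"
  shows "joint P t (t+2) (t+1) cc (Some a) = (\<Sum>x\<in>UNIV. f x * mpow S t x a) * g a"
  using jointL_gen[OF ok, where cc=cc and a=a] ps_last[where t=t and a=a and f=f and S=S and g=g] E by (simp cong: if_cong)

lemma mpow_nonneg: "(\<And>x y. S x y \<ge> 0) \<Longrightarrow> mpow S n x y \<ge> 0"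
  by (induction n arbitrary: y) (auto intro!: sum_nonneg mult_nonneg_nonneg)

lemma mpow_row:
  assumes S0: "\<And>x y. S x y \<ge> 0" and S1: "\<And>x. (\<Sum>y\<in>UNIV. S x y) \<le> 1"
  shows "(\<Sum>y\<in>UNIV. mpow S n x y) \<le> 1"
proof (induction n)
  case 0 then show ?case by simp
next
  case (Suc n)
  have "(\<Sum>y\<in>UNIV. mpow S (Suc n) x y) = (\<Sum>z\<in>UNIV. mpow S n x z * (\<Sum>y\<in>UNIV. S z y))"
    by (simp add: sum_distrib_left) (rule sum.swap)
  also have "\<dots> \<le> (\<Sum>z\<in>UNIV. mpow S n x z)"
  proof (rule sum_mono)
    fix z
    have "0 \<le> mpow S n x z" using mpow_nonneg S0 by blast
    then show "mpow S n x z * (\<Sum>y\<in>UNIV. S z y) \<le> mpow S n x z"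
      by (rule mult_left_le[OF S1])
  qed
  finally show ?case using Suc by simp
qed

lemma mpow_col:
  assumes S0: "\<And>x y. S x y \<ge> 0" and S1: "\<And>x. (\<Sum>y\<in>UNIV. S x y) \<le> 1"
    and sym: "\<And>x y. S x y = S y x"
  shows "(\<Sum>x\<in>UNIV. mpow S n x y) \<le> 1"
proof (induction n arbitrary: y)
  case 0 then show ?case by simp
next
  case (Suc n)
  have "(\<Sum>x\<in>UNIV. mpow S (Suc n) x y) = (\<Sum>z\<in>UNIV. (\<Sum>x\<in>UNIV. mpow S n x z) * S z y)"
    by (simp add: sum_distrib_right) (rule sum.swap)
  also have "\<dots> \<le> (\<Sum>z\<in>UNIV. S z y)"
  proof (rule sum_mono)
    fix z
    have "0 \<le> (\<Sum>x\<in>UNIV. mpow S n x z)" using mpow_nonneg S0 by (blast intro: sum_nonneg)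
    then show "(\<Sum>x\<in>UNIV. mpow S n x z) * S z y \<le> S z y"
      by (rule mult_left_le_one_le[OF S0 _ Suc])
  qed
  also have "\<dots> = (\<Sum>z\<in>UNIV. S y z)" using sym by simp
  finally show ?case using S1[of y] by simp
qed


lemma assemble:
  fixes P Q Q' :: "'a::finite option list \<Rightarrow> real" and m r s :: "'a \<Rightarrow> real" and Z :: real
  assumes pS: "\<And>a. marg P t k (Some a) = m a * r a / Z" and pN: "marg P t k None = 0"
    and qS: "\<And>a. marg Q t k (Some a) = m a * s a"
    and J: "\<And>a b. joint P t j k b a = (if b = None then marg P t k a else 0)"
    and W: "\<And>a. m a > 0 \<Longrightarrow> r a > 0 \<Longrightarrow> joint Q' t j k None (Some a) / marg Q' t k (Some a) = m a"
    and m0: "\<And>a. m a \<ge> 0" and r0: "\<And>a. r a \<ge> 0" and rs: "\<And>a. r a \<le> s a" and s1: "\<And>a. s a \<le> 1"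
    and Zpos: "Z > 0" and Zs: "(\<Sum>a\<in>UNIV. m a * r a) = Z"
  shows "KL (marg P t k) (marg Q t k) + condKL P Q' t j k \<ge> ereal (- log 2 (\<Sum>a\<in>UNIV. (m a)\<^sup>2))"
proof -
  define p where "p = marg P t k"
  define q where "q = marg Q t k"
  define w where "w = (\<lambda>x. case x of None \<Rightarrow> 1 | Some a \<Rightarrow> m a)"
  have p0: "p x \<ge> 0" for x
    by (cases x) (auto simp: p_def pS pN m0 r0 Zpos intro!: divide_nonneg_pos mult_nonneg_nonneg)
  have ppos: "\<exists>a. x = Some a \<and> m a > 0 \<and> r a > 0" if "p x > 0" for x
  proof (cases x)
    case None then show ?thesis using that by (simp add: p_def pN)
  next
    case (Some a)
    then have "m a * r a > 0" using that Zpos by (simp add: p_def pS zero_less_divide_iff)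
    then have "m a > 0 \<and> r a > 0" using m0[of a] r0[of a] by (simp add: zero_less_mult_iff)
    then show ?thesis using Some by blast
  qed
  have C: "condKL P Q' t j k = ereal (\<Sum>x\<in>UNIV. p x * (if p x > 0 then - log 2 (w x) else 0))"
    unfolding p_def
  proof (rule condKL_eval[OF J])
    show "\<And>a. 0 \<le> marg P t k a" using p0 by (simp add: p_def)
    fix x assume "0 < marg P t k x"
    then obtain a where a: "x = Some a" "m a > 0" "r a > 0" using ppos by (auto simp: p_def)
    show "joint Q' t j k None x / marg Q' t k x = w x \<and> 0 < w x"
      using a W[of a] by (simp add: w_def)
  qed
  have K: "KL p q = ereal (\<Sum>x\<in>UNIV. if p x = 0 then 0 else p x * log 2 (p x / q x))"
  proof (rule KL_eval)
    fix x assume "p x > 0"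
    then obtain a where a: "x = Some a" "m a > 0" "r a > 0" using ppos by blast
    then have "s a > 0" using rs[of a] by linarith
    then show "q x > 0" using a by (simp add: q_def qS)
  qed
  have p1: "sum p UNIV = 1"
  proof -
    have "sum p UNIV = (\<Sum>a\<in>UNIV. m a * r a / Z)" by (simp add: sum_option p_def pS pN)
    also have "\<dots> = 1" using Zs Zpos by (simp add: sum_divide_distrib[symmetric])
    finally show ?thesis .
  qed
  define h where "h = (\<lambda>x. case x of None \<Rightarrow> 0 | Some a \<Rightarrow> (m a)\<^sup>2)"
  have M: "(\<Sum>x\<in>{x. p x > 0}. q x * w x) \<le> (\<Sum>a\<in>UNIV. (m a)\<^sup>2)"
  proof -
    have "(\<Sum>x\<in>{x. p x > 0}. q x * w x) \<le> (\<Sum>x\<in>{x. p x > 0}. h x)"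
    proof (rule sum_mono)
      fix x assume "x \<in> {x. p x > 0}"
      then obtain a where a: "x = Some a" "m a > 0" "r a > 0" using ppos by blast
      have "m a * s a * m a \<le> m a * 1 * m a"
        using a s1[of a] by (intro mult_right_mono mult_left_mono) auto
      then show "q x * w x \<le> h x" using a by (simp add: q_def qS w_def h_def power2_eq_square)
    qed
    also have "\<dots> \<le> (\<Sum>x\<in>UNIV. h x)"
      by (rule sum_mono2) (auto simp: h_def split: option.splits)
    also have "\<dots> = (\<Sum>a\<in>UNIV. (m a)\<^sup>2)" by (simp add: sum_option h_def)
    finally show ?thesis .
  qed
  have G: "(\<Sum>x\<in>UNIV. if p x = 0 then 0 else p x * log 2 (p x / q x))
       + (\<Sum>x\<in>UNIV. p x * (if p x > 0 then - log 2 (w x) else 0)) \<ge> - log 2 (\<Sum>a\<in>UNIV. (m a)\<^sup>2)"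
  proof (rule gibbs[OF p0 p1 _ M])
    fix x assume "p x > 0"
    then obtain a where a: "x = Some a" "m a > 0" "r a > 0" using ppos by blast
    then have "s a > 0" using rs[of a] by linarith
    then show "q x > 0 \<and> w x > 0" using a by (simp add: q_def qS w_def)
  qed
  show ?thesis
  proof -
    have "KL (marg P t k) (marg Q t k) + condKL P Q' t j k = KL p q + condKL P Q' t j k"
      by (simp add: p_def q_def)
    also have "\<dots> = ereal ((\<Sum>x\<in>UNIV. if p x = 0 then 0 else p x * log 2 (p x / q x))
       + (\<Sum>x\<in>UNIV. p x * (if p x > 0 then - log 2 (w x) else 0)))"
      unfolding K C by simp
    finally show ?thesis using G by simp
  qed
qed


theorem lemma3p6:
  fixes S :: "'a::finite \<Rightarrow> 'a \<Rightarrow> real" and u v :: "'a \<Rightarrow> real"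
    and z0 :: 'a and t :: nat
  assumes S_nonneg: "\<And>x y. S x y \<ge> 0"
    and S_sym: "\<And>x y. S x y = S y x"
    and S_sub: "\<And>x. (\<Sum>y\<in>UNIV. S x y) \<le> 1"
    and u_nonneg: "\<And>x. u x \<ge> 0" and v_nonneg: "\<And>x. v x \<ge> 0"
    and u_norm: "sqrt (\<Sum>x\<in>UNIV. (u x)\<^sup>2) = 1"
    and v_norm: "sqrt (\<Sum>x\<in>UNIV. (v x)\<^sup>2) = 1"
    and t_pos: "t > 0"
  defines "mu \<equiv> (\<lambda>x. u x / (\<Sum>y\<in>UNIV. \<bar>u y\<bar>))"
    and "nu \<equiv> (\<lambda>x. v x / (\<Sum>y\<in>UNIV. \<bar>v y\<bar>))"
  assumes pos: "bilin (mpow S t) mu nu > 0"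
  shows "(KL (marg (Xdist S mu nu z0 t) t 1) (marg (Fdist S mu nu z0 t) t 1)
           + condKL (Xdist S mu nu z0 t) (Bdist S mu nu z0 t) t 0 1
         \<ge> ereal (- log 2 (\<Sum>x\<in>UNIV. (mu x)\<^sup>2))) \<and>
         (KL (marg (Xdist S mu nu z0 t) t (t+1)) (marg (Bdist S mu nu z0 t) t (t+1))
           + condKL (Xdist S mu nu z0 t) (Fdist S mu nu z0 t) t (t+2) (t+1)
         \<ge> ereal (- log 2 (\<Sum>x\<in>UNIV. (nu x)\<^sup>2)))"
proof -
  define Z where "Z = bilin (mpow S t) mu nu"
  have Zpos: "Z > 0" using pos by (simp add: Z_def)
  have l1pos: "(\<Sum>y\<in>UNIV. \<bar>f y\<bar>) > 0" if "sqrt (\<Sum>x\<in>UNIV. (f x)\<^sup>2) = 1" for f :: "'a \<Rightarrow> real"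
  proof (rule ccontr)
    assume "\<not> (\<Sum>y\<in>UNIV. \<bar>f y\<bar>) > 0"
    then have "(\<Sum>y\<in>UNIV. \<bar>f y\<bar>) = 0" by (meson abs_ge_zero not_less sum_nonneg order_antisym)
    then have "\<forall>y\<in>UNIV. \<bar>f y\<bar> = 0" by (subst sum_nonneg_eq_0_iff[symmetric]) auto
    then have "(\<Sum>x\<in>UNIV. (f x)\<^sup>2) = 0" by simp
    then show False using that by simp
  qed
  have le1: "f x / (\<Sum>y\<in>UNIV. \<bar>f y\<bar>) \<le> 1" if "sqrt (\<Sum>x\<in>UNIV. (f x)\<^sup>2) = 1" "\<And>x. f x \<ge> 0"
    for f :: "'a \<Rightarrow> real" and x
  proof -
    have "f x \<le> (\<Sum>y\<in>UNIV. \<bar>f y\<bar>)"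
      using member_le_sum[of x UNIV "\<lambda>y. \<bar>f y\<bar>"] that(2)[of x] by simp
    then show ?thesis using l1pos[OF that(1)] by simp
  qed
  have mu0: "\<And>x. mu x \<ge> 0" unfolding mu_def using u_nonneg l1pos[OF u_norm] by simp
  have nu0: "\<And>x. nu x \<ge> 0" unfolding nu_def using v_nonneg l1pos[OF v_norm] by simp
  have mu1: "\<And>x. mu x \<le> 1" unfolding mu_def by (rule le1[OF u_norm u_nonneg])
  have nu1: "\<And>x. nu x \<le> 1" unfolding nu_def by (rule le1[OF v_norm v_nonneg])
  have M0: "\<And>x y. mpow S t x y \<ge> 0" using mpow_nonneg S_nonneg by blast
  let ?X = "Xdist S mu nu z0 t" and ?F = "Fdist S mu nu z0 t" and ?B = "Bdist S mu nu z0 t"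
  have XE: "(\<Sum>b\<in>UNIV. \<Sum>c\<in>UNIV. ?X (emb b ys c)) = (mu (ys!0) / Z) * pw S t ys * nu (ys!t)"
    if "length ys = t+1" for ys
    using that by (simp add: Xdist_emb sum_two_and Z_def)
  have FE: "(\<Sum>b\<in>UNIV. \<Sum>c\<in>UNIV. ?F (emb b ys c)) = mu (ys!0) * pw S t ys * (\<lambda>_. 1) (ys!t)"
    if "length ys = t+1" for ys
    using that by (simp add: Fdist_emb sum_option sum_distrib_left[symmetric] distrib_left[symmetric])
  have BE: "(\<Sum>b\<in>UNIV. \<Sum>c\<in>UNIV. ?B (emb b ys c)) = (\<lambda>_. 1) (ys!0) * pw S t ys * nu (ys!t)"
    if "length ys = t+1" for ys
    using that by (simp add: Bdist_emb[OF _ S_sym] sum_option sum_distrib_left[symmetric] distrib_left[symmetric])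
  have JBE: "(\<Sum>c\<in>UNIV. ?B (emb None ys c)) = mu (ys!0) * pw S t ys * nu (ys!t)"
    if "length ys = t+1" for ys
    using that by (simp add: Bdist_emb[OF _ S_sym] sum_option)
  have JFE: "(\<Sum>b\<in>UNIV. ?F (emb b ys None)) = mu (ys!0) * pw S t ys * nu (ys!t)"
    if "length ys = t+1" for ys
    using that by (simp add: Fdist_emb sum_option)
  have Xok: "\<And>w. ?X w \<noteq> 0 \<Longrightarrow> (\<forall>i\<in>{1..t+1}. w!i \<noteq> None)" by (rule Xdist_ok)
  have Fok: "\<And>w. ?F w \<noteq> 0 \<Longrightarrow> (\<forall>i\<in>{1..t+1}. w!i \<noteq> None)" by (rule Fdist_ok)
  have Bok: "\<And>w. ?B w \<noteq> 0 \<Longrightarrow> (\<forall>i\<in>{1..t+1}. w!i \<noteq> None)" by (rule Bdist_ok)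
  define Pm where "Pm = (\<lambda>a. \<Sum>y\<in>UNIV. mpow S t a y * nu y)"
  define Rs where "Rs = (\<lambda>a. \<Sum>y\<in>UNIV. mpow S t a y)"
  define Pm2 where "Pm2 = (\<lambda>a. \<Sum>x\<in>UNIV. mu x * mpow S t x a)"
  define Cs where "Cs = (\<lambda>a. \<Sum>x\<in>UNIV. mpow S t x a)"
  have part1: "KL (marg ?X t 1) (marg ?F t 1) + condKL ?X ?B t 0 1 \<ge> ereal (- log 2 (\<Sum>x\<in>UNIV. (mu x)\<^sup>2))"
  proof (rule assemble[where m=mu and r=Pm and s=Rs and Z=Z])
    fix a
    show "marg ?X t 1 (Some a) = mu a * Pm a / Z"
      using marg_first[OF Xok XE, of a] by (simp add: Pm_def)
    show "marg ?F t 1 (Some a) = mu a * Rs a"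
      using marg_first[OF Fok FE, of a] by (simp add: Rs_def)
    show "mu a \<ge> 0" by (rule mu0)
    show "Pm a \<ge> 0" unfolding Pm_def using M0 nu0 by (simp add: sum_nonneg)
    show "Pm a \<le> Rs a" unfolding Pm_def Rs_def
      by (rule sum_mono) (use M0 nu1 in \<open>simp add: mult_left_le\<close>)
    show "Rs a \<le> 1" unfolding Rs_def by (rule mpow_row[OF S_nonneg S_sub])
    assume "mu a > 0" "Pm a > 0"
    then show "joint ?B t 0 1 None (Some a) / marg ?B t 1 (Some a) = mu a"
      using joint_first[OF Bok JBE, of a] marg_first[OF Bok BE, of a] by (simp add: Pm_def)
  next
    show "marg ?X t 1 None = 0" using marg_None[OF Xok, where j=0] by simp
    show "\<And>a b. joint ?X t 0 1 b a = (if b = None then marg ?X t 1 a else 0)"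
      by (rule joint_cond) (rule Xdist_0)
    show "Z > 0" by (rule Zpos)
    show "(\<Sum>a\<in>UNIV. mu a * Pm a) = Z"
      by (simp add: Z_def bilin_def Pm_def sum_distrib_left mult.assoc)
  qed
  have part2: "KL (marg ?X t (t+1)) (marg ?B t (t+1)) + condKL ?X ?F t (t+2) (t+1) \<ge> ereal (- log 2 (\<Sum>x\<in>UNIV. (nu x)\<^sup>2))"
  proof (rule assemble[where m=nu and r=Pm2 and s=Cs and Z=Z])
    fix a
    show "marg ?X t (t+1) (Some a) = nu a * Pm2 a / Z"
      using marg_last[OF Xok XE, of a] by (simp add: Pm2_def sum_divide_distrib[symmetric])
    show "marg ?B t (t+1) (Some a) = nu a * Cs a"
      using marg_last[OF Bok BE, of a] by (simp add: Cs_def)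
    show "nu a \<ge> 0" by (rule nu0)
    show "Pm2 a \<ge> 0" unfolding Pm2_def using M0 mu0 by (simp add: sum_nonneg)
    show "Pm2 a \<le> Cs a" unfolding Pm2_def Cs_def
      by (rule sum_mono) (rule mult_left_le_one_le[OF M0 mu0 mu1])
    show "Cs a \<le> 1" unfolding Cs_def by (rule mpow_col[OF S_nonneg S_sub S_sym])
    assume "nu a > 0" "Pm2 a > 0"
    then show "joint ?F t (t+2) (t+1) None (Some a) / marg ?F t (t+1) (Some a) = nu a"
      using joint_last[OF Fok JFE, of a] marg_last[OF Fok FE, of a] by (simp add: Pm2_def)
  next
    show "marg ?X t (t+1) None = 0" using marg_None[OF Xok, where j=t] by simp
    show "\<And>a b. joint ?X t (t+2) (t+1) b a = (if b = None then marg ?X t (t+1) a else 0)"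
      by (rule joint_cond) (rule Xdist_last)
    show "Z > 0" by (rule Zpos)
    show "(\<Sum>a\<in>UNIV. nu a * Pm2 a) = Z"
      unfolding Z_def bilin_def Pm2_def
      by (subst sum.swap) (simp add: sum_distrib_left sum_distrib_right mult.commute mult.left_commute)
  qed
  show ?thesis using part1 part2 by simp
qed

end
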